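(* For every integer $n\geq 1$, $$\sum_{k=1}^{n-1}B_{2k}\bar B_{2n-2k}=\frac{1}{n+1}\sum_{k=1}^{n}B_{2k}B_{2n-2k}\,\frac{1-2^{2k-1}}{2^{2n-1}}\binom{2n+2}{2k+2}+(2n-1)\frac{B_{2n}}{2^{2n}}.$$
   Context: $B_n$ denotes the Bernoulli numbers, defined by $\frac{x}{e^x-1}=\sum_{n\ge 0}B_n\frac{x^n}{n!}$ (so $B_0=1$). $\bar B_n:=\frac{1-2^{n-1}}{2^{n-1}}B_n$. An empty sum equals $0$. *)

theory Defs
  imports "HOL-Computational_Algebra.Formal_Power_Series"
begin

text \<open>Division of formal power series (fps_X has subdegree 1, fps_exp 1 - 1 has subdegree 1)
  gives exactly the power series of x/(e^x-1).\<close>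

definition bernoulli_fps :: "real fps" where
  "bernoulli_fps = fps_X / (fps_exp 1 - 1)"

definition bernoulli :: "nat \<Rightarrow> real" where
  "bernoulli n = fact n * fps_nth bernoulli_fps n"

definition bernoulli_bar :: "nat \<Rightarrow> real" where
  "bernoulli_bar n = (1 - 2 ^ n / 2) / (2 ^ n / 2) * bernoulli n"

end

theory Submission
  imports Defs "HOL-Analysis.Analysis"
begin

definition fsc :: "real \<Rightarrow> real fps \<Rightarrow> real fps" where
  "fsc c p = Abs_fps (\<lambda>n. c^n * fps_nth p n)"

lemma fsc_nth[simp]: "fps_nth (fsc c p) n = c^n * fps_nth p n" by (simp add: fsc_def)

lemma fsc_mult: "fsc c (p*q) = fsc c p * fsc c q"
proof (rule fps_ext)
  fix n
  have "fps_nth (fsc c (p*q)) n = (\<Sum>i=0..n. c^n * (fps_nth p i * fps_nth q (n-i)))"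
    by (simp add: fps_mult_nth sum_distrib_left)
  also have "\<dots> = (\<Sum>i=0..n. (c^i * fps_nth p i) * (c^(n-i) * fps_nth q (n-i)))"
  proof (rule sum.cong)
    fix i assume "i \<in> {0..n}"
    then have "c^n = c^i * c^(n-i)" by (simp add: power_add[symmetric])
    then show "c^n * (fps_nth p i * fps_nth q (n-i)) = (c^i * fps_nth p i) * (c^(n-i) * fps_nth q (n-i))" by simp
  qed simp
  also have "\<dots> = fps_nth (fsc c p * fsc c q) n" by (simp add: fps_mult_nth)
  finally show "fps_nth (fsc c (p*q)) n = fps_nth (fsc c p * fsc c q) n" .
qed

lemma fsc_diff: "fsc c (p - q) = fsc c p - fsc c q"
  by (rule fps_ext) (simp add: algebra_simps)

lemma fsc_one: "fsc c 1 = 1"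
  by (rule fps_ext) simp

lemma fsc_X: "fsc c fps_X = fps_const c * fps_X"
  by (rule fps_ext) (simp add: fps_X_def)

lemma fsc_exp: "fsc c (fps_exp 1) = fps_exp c"
  by (rule fps_ext) simp

lemma bfps_eq: "bernoulli_fps * (fps_exp 1 - 1) = fps_X"
proof -
  have ne: "fps_exp (1::real) - 1 \<noteq> 0"
  proof
    assume "fps_exp (1::real) - 1 = 0"
    then have "fps_nth (fps_exp (1::real) - 1) 1 = 0" by simp
    then show False by simp
  qed
  have "subdegree (fps_exp (1::real) - 1) \<le> 1"
    by (rule subdegree_leI) simp
  then show ?thesis unfolding bernoulli_fps_def
    by (intro fps_times_divide_eq ne) simp
qed

definition FF :: "real \<Rightarrow> real fps" where
  "FF c = Abs_fps (\<lambda>n. bernoulli n * c^n / fact n)"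

definition GG :: "real \<Rightarrow> real fps" where
  "GG c = Abs_fps (\<lambda>n. bernoulli_bar n * c^n / fact n)"

lemma FF_nth[simp]: "fps_nth (FF c) n = bernoulli n * c^n / fact n" by (simp add: FF_def)
lemma GG_nth[simp]: "fps_nth (GG c) n = bernoulli_bar n * c^n / fact n" by (simp add: GG_def)

lemma FF_fsc: "FF c = fsc c bernoulli_fps"
  by (rule fps_ext) (simp add: bernoulli_def)

lemma FF_eq: "FF c * (fps_exp c - 1) = fps_const c * fps_X"
proof -
  have "fsc c (bernoulli_fps * (fps_exp 1 - 1)) = fsc c fps_X" by (simp add: bfps_eq)
  then show ?thesis by (simp add: fsc_mult fsc_diff fsc_one fsc_X fsc_exp FF_fsc)
qed

lemma bbar_alt: "bernoulli_bar n = (2 / 2^n - 1) * bernoulli n"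
  unfolding bernoulli_bar_def by (simp add: field_simps)

lemma GG_alt: "GG c = fps_const 2 * FF (c/2) - FF c"
  by (rule fps_ext) (simp add: bbar_alt field_simps power_divide)

lemma exp_sq: "fps_exp (c::real) = fps_exp (c/2) * fps_exp (c/2)"
  by (simp add: fps_exp_add_mult[symmetric])

lemma GG_eq: "GG c * (fps_exp c - 1) = fps_const c * fps_X * fps_exp (c/2)"
proof -
  have h: "FF (c/2) * (fps_exp (c/2) - 1) = fps_const (c/2) * fps_X" by (rule FF_eq)
  have h2: "FF c * (fps_exp c - 1) = fps_const c * fps_X" by (rule FF_eq)
  have c2: "fps_const 2 * fps_const (c/2) = fps_const c"
    by (simp add: fps_const_mult[symmetric])
  have e: "fps_exp c = fps_exp (c/2) * fps_exp (c/2)" by (rule exp_sq)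
  show ?thesis unfolding GG_alt using e h h2 c2 by algebra
qed

lemma expm1_ne: "(c::real) \<noteq> 0 \<Longrightarrow> fps_exp c - 1 \<noteq> 0"
proof
  assume "c \<noteq> 0" "fps_exp c - 1 = 0"
  then have "fps_nth (fps_exp c - 1) 1 = 0" by simp
  with \<open>c \<noteq> 0\<close> show False by simp
qed

lemma FF_odd: "FF 1 - FF (-1) = - fps_X"
proof -
  have h1: "FF 1 * (fps_exp 1 - 1) = fps_const 1 * fps_X" by (rule FF_eq)
  have h2: "FF (-1) * (fps_exp (-1) - 1) = fps_const (-1) * fps_X" by (rule FF_eq)
  have e: "fps_exp (1::real) * fps_exp (-1) = 1" by (simp add: fps_exp_add_mult[symmetric])
  have c: "fps_const (-1::real) = - 1" "fps_const (1::real) = 1" by simp_all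
  have "(FF 1 - FF (-1)) * ((fps_exp 1 - 1) * (fps_exp (-1) - 1)) = (- fps_X) * ((fps_exp 1 - 1) * (fps_exp (-1) - 1))"
    using h1 h2 e c by algebra
  moreover have "(fps_exp (1::real) - 1) * (fps_exp (-1) - 1) \<noteq> 0"
    using expm1_ne[of 1] expm1_ne[of "-1"] by simp
  ultimately show ?thesis using mult_right_cancel by blast
qed

lemma bernoulli_odd: assumes "odd n" "n \<noteq> 1" shows "bernoulli n = 0"
proof -
  have "fps_nth (FF 1 - FF (-1)) n = fps_nth (- fps_X) n" by (simp only: FF_odd)
  then have "bernoulli n / fact n - bernoulli n * (-1)^n / fact n = 0"
    using assms by (simp add: fps_X_def)
  then show ?thesis using assms by simp
qed

lemma key_fps:
  assumes u0: "u \<noteq> 0" and u1: "u \<noteq> 1"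
  shows "FF u * GG (1-u) + GG u * FF (1-u) =
     fps_const 2 * FF (1/2) * (fps_const (1-u) * GG u + fps_const u * GG (1-u))"
proof -
  define a where "a = fps_exp (u/2)"
  define b where "b = fps_exp ((1-u)/2)"
  have ea: "fps_exp u = a * a" unfolding a_def by (rule exp_sq)
  have eb: "fps_exp (1-u) = b * b" unfolding b_def by (rule exp_sq)
  have eab: "fps_exp (1/2) = a * b" unfolding a_def b_def
    by (simp add: fps_exp_add_mult[symmetric] add_divide_distrib[symmetric])
  have h1: "FF u * (fps_exp u - 1) = fps_const u * fps_X" by (rule FF_eq)
  have h2: "GG u * (fps_exp u - 1) = fps_const u * fps_X * a" unfolding a_def by (rule GG_eq)
  have h3: "FF (1-u) * (fps_exp (1-u) - 1) = fps_const (1-u) * fps_X" by (rule FF_eq)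
  have h4: "GG (1-u) * (fps_exp (1-u) - 1) = fps_const (1-u) * fps_X * b" unfolding b_def by (rule GG_eq)
  have h5: "FF (1/2) * (fps_exp (1/2) - 1) = fps_const (1/2) * fps_X" by (rule FF_eq)
  have c1: "fps_const (2::real) * fps_const (1/2) = 1" by (simp add: fps_const_mult[symmetric])
  have c2: "fps_const (1-u) = 1 - fps_const u" by (simp add: fps_const_sub)
  have "(FF u * GG (1-u) + GG u * FF (1-u)) * ((fps_exp u - 1) * (fps_exp (1-u) - 1) * (fps_exp (1/2) - 1)) =
     (fps_const 2 * FF (1/2) * (fps_const (1-u) * GG u + fps_const u * GG (1-u))) * ((fps_exp u - 1) * (fps_exp (1-u) - 1) * (fps_exp (1/2) - 1))"
    using ea eb eab h1 h2 h3 h4 h5 c1 c2 by algebra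
  moreover have "(fps_exp u - 1) * (fps_exp (1-u) - 1) * (fps_exp (1/2::real) - 1) \<noteq> 0"
    using expm1_ne[of u] expm1_ne[of "1-u"] expm1_ne[of "1/2"] u0 u1 by simp
  ultimately show ?thesis using mult_right_cancel by blast
qed

lemma beta_int:
  "((\<lambda>u::real. u^a * (1-u)^b) has_integral (fact a * fact b / fact (a+b+1))) {0..1}"
proof -
  have h: "((\<lambda>t. t powr (real (a+1) - 1) * (1 - t) powr (real (b+1) - 1)) has_integral Beta (real (a+1)) (real (b+1))) {0..1}"
    by (rule has_integral_Beta_real) auto
  have g: "Beta (real (a+1)) (real (b+1)) = fact a * fact b / fact (a+b+1)"
    unfolding Beta_def using Gamma_fact[of a, where 'a=real] Gamma_fact[of b, where 'a=real]
      Gamma_fact[of "a+b+1", where 'a=real]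
    by (simp add: add.commute add.left_commute)
  show ?thesis
    apply (rule has_integral_spike_finite[of "{0,1}", OF _ _ h[unfolded g]])
     apply simp
    apply (auto simp: powr_realpow)
    done
qed

lemma coeff_identity:
  assumes u0: "0 < u" and u1: "u < 1"
  shows "(\<Sum>i=0..N. (bernoulli i * bernoulli_bar (N-i) / (fact i * fact (N-i))) * (u^i * (1-u)^(N-i)))
       + (\<Sum>i=0..N. (bernoulli_bar i * bernoulli (N-i) / (fact i * fact (N-i))) * (u^i * (1-u)^(N-i)))
       = (\<Sum>i=0..N. (2 * bernoulli i * (1/2)^i * bernoulli_bar (N-i) / (fact i * fact (N-i)))
            * (u^(N-i) * (1-u)^1 + u^1 * (1-u)^(N-i)))"
proof -
  have "fps_nth (FF u * GG (1-u) + GG u * FF (1-u)) N =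
     fps_nth (fps_const 2 * FF (1/2) * (fps_const (1-u) * GG u + fps_const u * GG (1-u))) N"
    using key_fps[of u] u0 u1 by simp
  then have e: "(\<Sum>i=0..N. (bernoulli i * u^i / fact i) * (bernoulli_bar (N-i) * (1-u)^(N-i) / fact (N-i)))
     + (\<Sum>i=0..N. (bernoulli_bar i * u^i / fact i) * (bernoulli (N-i) * (1-u)^(N-i) / fact (N-i)))
     = (\<Sum>i=0..N. (2 * (bernoulli i * (1/2)^i / fact i)) * ((1-u) * (bernoulli_bar (N-i) * u^(N-i) / fact (N-i))
            + u * (bernoulli_bar (N-i) * (1-u)^(N-i) / fact (N-i))))"
    by (simp only: mult.assoc fps_mult_left_const_nth fps_add_nth)
       (simp add: fps_mult_nth[of "FF _"] fps_mult_nth[of "GG _"] sum_distrib_left mult.assoc)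
  have a: "(\<Sum>i=0..N. (bernoulli i * bernoulli_bar (N-i) / (fact i * fact (N-i))) * (u^i * (1-u)^(N-i)))
     = (\<Sum>i=0..N. (bernoulli i * u^i / fact i) * (bernoulli_bar (N-i) * (1-u)^(N-i) / fact (N-i)))"
    by (intro sum.cong refl) (simp add: field_simps)
  have b: "(\<Sum>i=0..N. (bernoulli_bar i * bernoulli (N-i) / (fact i * fact (N-i))) * (u^i * (1-u)^(N-i)))
     = (\<Sum>i=0..N. (bernoulli_bar i * u^i / fact i) * (bernoulli (N-i) * (1-u)^(N-i) / fact (N-i)))"
    by (intro sum.cong refl) (simp add: field_simps)
  have c: "(\<Sum>i=0..N. (2 * bernoulli i * (1/2)^i * bernoulli_bar (N-i) / (fact i * fact (N-i)))
            * (u^(N-i) * (1-u)^1 + u^1 * (1-u)^(N-i)))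
     = (\<Sum>i=0..N. (2 * (bernoulli i * (1/2)^i / fact i)) * ((1-u) * (bernoulli_bar (N-i) * u^(N-i) / fact (N-i))
            + u * (bernoulli_bar (N-i) * (1-u)^(N-i) / fact (N-i))))"
    by (intro sum.cong refl) (simp add: field_simps)
  show ?thesis
    using e a b c by simp
qed

lemma integrated_identity:
  "(\<Sum>i=0..N. (bernoulli i * bernoulli_bar (N-i) / (fact i * fact (N-i))) * (fact i * fact (N-i) / fact (i + (N-i) + 1)))
       + (\<Sum>i=0..N. (bernoulli_bar i * bernoulli (N-i) / (fact i * fact (N-i))) * (fact i * fact (N-i) / fact (i + (N-i) + 1)))
       = (\<Sum>i=0..N. (2 * bernoulli i * (1/2)^i * bernoulli_bar (N-i) / (fact i * fact (N-i)))
            * (fact (N-i) * fact 1 / fact (N-i+1+1) + fact 1 * fact (N-i) / fact (1+(N-i)+1)))"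
  (is "?L = ?R")
proof -
  let ?f = "\<lambda>u::real. (\<Sum>i=0..N. (bernoulli i * bernoulli_bar (N-i) / (fact i * fact (N-i))) * (u^i * (1-u)^(N-i)))
       + (\<Sum>i=0..N. (bernoulli_bar i * bernoulli (N-i) / (fact i * fact (N-i))) * (u^i * (1-u)^(N-i)))"
  let ?g = "\<lambda>u::real. (\<Sum>i=0..N. (2 * bernoulli i * (1/2)^i * bernoulli_bar (N-i) / (fact i * fact (N-i)))
            * (u^(N-i) * (1-u)^1 + u^1 * (1-u)^(N-i)))"
  have hf: "(?f has_integral ?L) {0..1}"
    by (intro has_integral_add has_integral_sum has_integral_mult_right beta_int) auto
  have hg: "(?g has_integral ?R) {0..1}"
    by (intro has_integral_add has_integral_sum has_integral_mult_right beta_int) auto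
  have hf': "(?g has_integral ?L) {0..1}"
    apply (rule has_integral_spike_finite[of "{0,1}", OF _ _ hf])
     apply simp
    apply (rule coeff_identity[symmetric])
     apply auto
    done
  show ?thesis using has_integral_unique[OF hf' hg] .
qed

lemma half_aux: "(x::real)/c + x/c = y \<Longrightarrow> c \<noteq> 0 \<Longrightarrow> x = c/2*y"
  by (simp add: field_simps)

lemma term_aux: "(c::real)/2 * (4*b*p*bb/d) = 2*c/d*p*b*bb"
  by (simp add: field_simps)

lemma S_identity:
  "(\<Sum>i=0..N. bernoulli i * bernoulli_bar (N-i)) =
   (\<Sum>i=0..N. 2 * fact (N+1) / (fact i * fact (N-i+2)) * (1/2)^i * bernoulli i * bernoulli_bar (N-i))"
proof -
  have I: ?thesis if "(\<Sum>i=0..N. bernoulli i * bernoulli_bar (N-i) / fact (N+1))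
       + (\<Sum>i=0..N. bernoulli_bar i * bernoulli (N-i) / fact (N+1))
       = (\<Sum>i=0..N. 4 * bernoulli i * (1/2)^i * bernoulli_bar (N-i) / (fact i * fact (N-i+2)))"
  proof -
    have r: "(\<Sum>i=0..N. bernoulli_bar i * bernoulli (N-i)) = (\<Sum>i=0..N. bernoulli i * bernoulli_bar (N-i))"
      by (subst sum.atLeastAtMost_rev) (intro sum.cong refl, auto)
    have "(\<Sum>i=0..N. bernoulli i * bernoulli_bar (N-i)) / fact (N+1) + (\<Sum>i=0..N. bernoulli i * bernoulli_bar (N-i)) / fact (N+1) =
        (\<Sum>i=0..N. 4 * bernoulli i * (1/2)^i * bernoulli_bar (N-i) / (fact i * fact (N-i+2)))"
      using that unfolding sum_divide_distrib[symmetric] r .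
    then have "(\<Sum>i=0..N. bernoulli i * bernoulli_bar (N-i)) =
        fact (N+1) / 2 * (\<Sum>i=0..N. 4 * bernoulli i * (1/2)^i * bernoulli_bar (N-i) / (fact i * fact (N-i+2)))"
      by (rule half_aux) simp
    also have "\<dots> = (\<Sum>i=0..N. 2 * fact (N+1) / (fact i * fact (N-i+2)) * (1/2)^i * bernoulli i * bernoulli_bar (N-i))"
      unfolding sum_distrib_left by (intro sum.cong refl) (rule term_aux)
    finally show ?thesis .
  qed
  show ?thesis
  proof (rule I)
    have "(\<Sum>i=0..N. bernoulli i * bernoulli_bar (N-i) / fact (N+1))
       = (\<Sum>i=0..N. (bernoulli i * bernoulli_bar (N-i) / (fact i * fact (N-i))) * (fact i * fact (N-i) / fact (i + (N-i) + 1)))"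
      by (intro sum.cong refl) (simp add: field_simps)
    moreover have "(\<Sum>i=0..N. bernoulli_bar i * bernoulli (N-i) / fact (N+1))
       = (\<Sum>i=0..N. (bernoulli_bar i * bernoulli (N-i) / (fact i * fact (N-i))) * (fact i * fact (N-i) / fact (i + (N-i) + 1)))"
      by (intro sum.cong refl) (simp add: field_simps)
    moreover have "(\<Sum>i=0..N. 4 * bernoulli i * (1/2)^i * bernoulli_bar (N-i) / (fact i * fact (N-i+2)))
       = (\<Sum>i=0..N. (2 * bernoulli i * (1/2)^i * bernoulli_bar (N-i) / (fact i * fact (N-i)))
            * (fact (N-i) * fact 1 / fact (N-i+1+1) + fact 1 * fact (N-i) / fact (1+(N-i)+1)))"
      by (intro sum.cong refl) (simp add: field_simps)
    ultimately show "(\<Sum>i=0..N. bernoulli i * bernoulli_bar (N-i) / fact (N+1))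
       + (\<Sum>i=0..N. bernoulli_bar i * bernoulli (N-i) / fact (N+1))
       = (\<Sum>i=0..N. 4 * bernoulli i * (1/2)^i * bernoulli_bar (N-i) / (fact i * fact (N-i+2)))"
      using integrated_identity[of N] by simp
  qed
qed


lemma term_aux2:
  assumes "Fj > 0" "Fk > 0" "P > 0" "Q > 0" "(m::real) > 0"
  shows "2 * A / (Fj * Fk) * (1 / P) * b1 * ((2 / (2 * Q) - 1) * b2)
    = 1 / m * (b2 * b1 * ((1 - Q) / (P * Q)) * ((2 * m) * A / (Fk * Fj)))"
  using assms by (simp add: field_simps)

lemma term_eq:
  assumes "j < n"
  shows "2 * fact (2*n+1) / (fact (2*j) * fact (2*n - 2*j + 2)) * (1/2)^(2*j) * bernoulli (2*j) * bernoulli_bar (2*n - 2*j)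
    = 1 / (real n + 1) * (bernoulli (2*(n-j)) * bernoulli (2*n - 2*(n-j)) * ((1 - 2 ^ (2*(n-j) - 1)) / 2 ^ (2*n - 1)) * real ((2*n + 2) choose (2*(n-j) + 2)))"
proof -
  define k where "k = n - j - 1"
  have n: "n = j + Suc k" using assms unfolding k_def by simp
  have e1: "2*n - 2*j = 2*Suc k" "2*(n-j) = 2 * Suc k" "2*n - 2*(n-j) = 2*j" "2*n - 2*Suc k = 2*j" "2 * Suc k - 1 = 2*k+1" "2*n - 1 = 2*j + 2*k + 1"
    using n by simp_all
  have bin: "real ((2*n + 2) choose (2 * Suc k + 2)) = fact (2*n+2) / (fact (2 * Suc k + 2) * fact (2*j))"
    by (subst binomial_fact) (use n in auto)
  have f: "fact (2*n+2) = (2 * (real n + 1)) * (fact (2*n+1) :: real)"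
    by (simp add: algebra_simps)
  have p: "(2::real) ^ (2*j + 2*k + 1) = 2 ^ (2*j) * 2 ^ (2*k+1)" by (simp add: power_add)
  have p2: "(2::real) ^ (2 * Suc k) = 2 * 2 ^ (2*k+1)" by simp
  show ?thesis
    unfolding e1 bin bbar_alt f p p2 power_one_over
    by (rule term_aux2) auto
qed


lemma bern0: "bernoulli 0 = 1"
proof -
  have "fps_nth (FF 1 * (fps_exp 1 - 1)) 1 = fps_nth (fps_const 1 * fps_X) 1" by (simp only: FF_eq)
  then show ?thesis by (simp add: fps_X_def)
qed

lemma bbar0: "bernoulli_bar 0 = 1" by (simp add: bbar_alt bern0)
lemma bbar1: "bernoulli_bar 1 = 0" by (simp add: bbar_alt)

lemma odd_prod: assumes "odd i" "odd m" shows "bernoulli i * bernoulli_bar m = 0"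
proof (cases "i = 1")
  case True
  show ?thesis
  proof (cases "m = 1")
    case True then show ?thesis by (simp add: bbar_alt)
  next
    case False then show ?thesis using assms by (simp add: bbar_alt bernoulli_odd)
  qed
next
  case False then show ?thesis using assms by (simp add: bernoulli_odd)
qed

lemma split_sum: "(\<Sum>i=0..2*(n::nat). h i) = (\<Sum>j=0..n. h (2*j)) + (\<Sum>j<n. h (2*j+1))"
proof (induction n)
  case 0 then show ?case by simp
next
  case (Suc n)
  have e: "2*Suc n = Suc (Suc (2*n))" by simp
  have "(\<Sum>i=0..2*Suc n. h i) = (\<Sum>i=0..2*n. h i) + h (Suc (2*n)) + h (Suc (Suc (2*n)))"
    by (simp only: e sum.atLeast0_atMost_Suc)
  then show ?case using Suc by (simp add: add_ac)
qed

lemma rev_sum: "(\<Sum>j=0..m. g (Suc m - j)) = (\<Sum>k=1..Suc m. (g k :: real))"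
  by (rule sum.reindex_bij_witness[of _ "\<lambda>k. Suc m - k" "\<lambda>j. Suc m - j"]) auto

theorem mainTheorem10:
  fixes n :: nat
  assumes "n \<ge> 1"
  shows "(\<Sum>k=1..n-1. bernoulli (2*k) * bernoulli_bar (2*n - 2*k)) =
         1 / (real n + 1) * (\<Sum>k=1..n. bernoulli (2*k) * bernoulli (2*n - 2*k)
              * ((1 - 2 ^ (2*k - 1)) / 2 ^ (2*n - 1)) * real ((2*n + 2) choose (2*k + 2)))
         + (2 * real n - 1) * bernoulli (2*n) / 2 ^ (2*n)"
proof -
  obtain m where n: "n = Suc m" using assms by (cases n) auto
  define h where "h i = bernoulli i * bernoulli_bar (2*n - i)" for i
  define r where "r i = 2 * fact (2*n+1) / (fact i * fact (2*n - i + 2)) * (1/2)^i * bernoulli i * bernoulli_bar (2*n - i)" for i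
  define T where "T k = bernoulli (2*k) * bernoulli (2*n - 2*k)
              * ((1 - 2 ^ (2*k - 1)) / 2 ^ (2*n - 1)) * real ((2*n + 2) choose (2*k + 2))" for k
  have S: "(\<Sum>i=0..2*n. h i) = (\<Sum>i=0..2*n. r i)"
    unfolding h_def r_def by (rule S_identity)
  have ho: "h (2*j+1) = 0" if "j < n" for j
    unfolding h_def by (rule odd_prod) (use that in auto)
  have ro: "r (2*j+1) = 0" if "j < n" for j
  proof -
    have z: "bernoulli (2*j+1) * bernoulli_bar (2*n - (2*j+1)) = 0"
      by (rule odd_prod) (use that in auto)
    have "r (2*j+1) = (2 * fact (2*n+1) / (fact (2*j+1) * fact (2*n - (2*j+1) + 2)) * (1/2)^(2*j+1)) * (bernoulli (2*j+1) * bernoulli_bar (2*n - (2*j+1)))"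
      unfolding r_def by (simp only: mult.assoc)
    also have "\<dots> = 0" by (simp only: z mult_zero_right)
    finally show ?thesis .
  qed
  have E: "(\<Sum>j=0..n. h (2*j)) = (\<Sum>j=0..n. r (2*j))"
  proof -
    have z1: "(\<Sum>j<n. h (2*j+1)) = 0" using ho by (intro sum.neutral) auto
    have z2: "(\<Sum>j<n. r (2*j+1)) = 0" using ro by (intro sum.neutral) auto
    show ?thesis using S unfolding split_sum z1 z2 by simp
  qed
  have L: "(\<Sum>j=0..n. h (2*j)) = bernoulli_bar (2*n) + (\<Sum>k=1..n-1. bernoulli (2*k) * bernoulli_bar (2*n - 2*k)) + bernoulli (2*n)"
  proof -
    have "(\<Sum>j=0..n. h (2*j)) = h 0 + (\<Sum>j=Suc 0..m. h (2*j)) + h (2*n)"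
      unfolding n by (simp add: sum.atLeast_Suc_atMost sum.atLeast0_atMost_Suc)
    then show ?thesis by (simp add: h_def bern0 bbar0 n)
  qed
  have R1: "r (2*n) = (2 * real n + 1) * bernoulli (2*n) / 2^(2*n)"
    by (simp add: r_def bbar0 power_one_over field_simps)
  have R2: "(\<Sum>j=0..m. r (2*j)) = 1 / (real n + 1) * (\<Sum>k=1..n. T k)"
  proof -
    have "(\<Sum>j=0..m. r (2*j)) = (\<Sum>j=0..m. 1 / (real n + 1) * T (Suc m - j))"
    proof (rule sum.cong[OF refl])
      fix j assume "j \<in> {0..m}"
      then have j: "j < n" using n by auto
      show "r (2*j) = 1 / (real n + 1) * T (Suc m - j)"
        unfolding r_def T_def n[symmetric] by (rule term_eq[OF j])
    qed
    also have "\<dots> = (\<Sum>k=1..Suc m. 1 / (real n + 1) * T k)" by (rule rev_sum)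
    also have "\<dots> = 1 / (real n + 1) * (\<Sum>k=1..n. T k)" by (simp only: sum_distrib_left n)
    finally show ?thesis .
  qed
  have R: "(\<Sum>j=0..n. r (2*j)) = 1 / (real n + 1) * (\<Sum>k=1..n. T k) + (2 * real n + 1) * bernoulli (2*n) / 2^(2*n)"
    using R1 R2 unfolding n by (simp add: sum.atLeast0_atMost_Suc)
  have bb: "bernoulli_bar (2*n) = (2 / 2^(2*n) - 1) * bernoulli (2*n)" by (rule bbar_alt)
  have "(\<Sum>k=1..n-1. bernoulli (2*k) * bernoulli_bar (2*n - 2*k)) = 1 / (real n + 1) * (\<Sum>k=1..n. T k)
     + ((2 * real n + 1) * bernoulli (2*n) / 2^(2*n) - bernoulli_bar (2*n) - bernoulli (2*n))"
    using E L R by simp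
  also have "(2 * real n + 1) * bernoulli (2*n) / 2^(2*n) - bernoulli_bar (2*n) - bernoulli (2*n)
      = (2 * real n - 1) * bernoulli (2*n) / 2 ^ (2*n)"
    unfolding bb by (simp add: field_simps)
  finally show ?thesis unfolding T_def by simp
qed


end
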